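(* Let the words $C_n$, $D_n$ over $\{1,2\}$ be defined by $C_0=D_0=\varepsilon$ (the empty word), $C_{k+1}=C_k\,1\,D_k$, $D_{k+1}=C_k\,2\,D_k$ for $k\ge 0$ (so $C_1=1$, $D_1=2$). Let $\tau=\tau_1\tau_2\cdots\tau_\ell$ ($\ell\ge 1$) be a pattern without internal dashes over $\{1,2\}$, and for a word $w$ let $\mathrm{occ}_\tau(w)$ denote the number of occurrences of $\tau$ in $w$, i.e. the number of factors (blocks of consecutive letters) $w_iw_{i+1}\cdots w_{i+\ell-1}$ of $w$ whose reduced form is $\tau$. Write $c_n^{\tau}=\mathrm{occ}_\tau(C_n)$ and $d_n^{\tau}=\mathrm{occ}_\tau(D_n)$. Let $k=\lceil \log_2\ell\rceil$, $a=\mathrm{occ}_\tau(\mathcal K_\ell(D_k1C_k))$ and $b=\mathrm{occ}_\tau(\mathcal K_\ell(D_k2C_k))$. Then for all $n>k+1$, $$c_n^{\tau}=\bigl(a+b+c_{k+1}^{\tau}+d_{k+1}^{\tau}\bigr)\cdot 2^{n-k-2}-b,\qquad d_n^{\tau}=\bigl(a+b+c_{k+1}^{\tau}+d_{k+1}^{\tau}\bigr)\cdot 2^{n-k-2}-a.$$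
   Context: Reduced form of a word over $\{1,2\}$: if the word contains both letters it is the word itself; if it consists of a single repeated letter $x^\ell$ its reduced form is $1^\ell$. So a pattern $\tau$ is a word over $\{1,2\}$ that is either $1^\ell$ or contains both letters; an occurrence of $1^\ell$ is any constant factor of length $\ell$, while an occurrence of a pattern containing both letters is a factor equal to it. Kernel: if $W=A\,x\,B$ where $A,B$ are words of the same length and $x$ is a letter, the kernel of order $j$, $\mathcal K_j(W)$, is the word consisting of the $j-1$ rightmost letters of $A$, followed by $x$, followed by the $j-1$ leftmost letters of $B$; if $|A|<j-1$ then $\mathcal K_j(W)$ is the empty word. Example: $\mathcal K_3(111211221)=12112$. Note $|C_k|=|D_k|=2^k-1$, so $D_k1C_k$ and $D_k2C_k$ have this form with $A=D_k$, $B=C_k$. *)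

theory Defs
  imports Complex_Main
begin

fun CD :: "nat \<Rightarrow> nat list \<times> nat list" where
  "CD 0 = ([], [])"
| "CD (Suc k) = (let (c, d) = CD k in (c @ [1] @ d, c @ [2] @ d))"

definition C :: "nat \<Rightarrow> nat list" where "C k = fst (CD k)"
definition D :: "nat \<Rightarrow> nat list" where "D k = snd (CD k)"

definition reduced :: "nat list \<Rightarrow> nat list" where
  "reduced u = (if 1 \<in> set u \<and> 2 \<in> set u then u else replicate (length u) 1)"

definition is_pattern :: "nat list \<Rightarrow> bool" where
  "is_pattern t \<longleftrightarrow> t \<noteq> [] \<and> set t \<subseteq> {1, 2} \<and>
     (t = replicate (length t) 1 \<or> (1 \<in> set t \<and> 2 \<in> set t))"

definition occ :: "nat list \<Rightarrow> nat list \<Rightarrow> nat" where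
  "occ t w = card {i. i + length t \<le> length w \<and> reduced (take (length t) (drop i w)) = t}"

text \<open>Kernel of order j of W = A x B with |A| = |B| (here given by A, x, B).\<close>
definition kernel :: "nat \<Rightarrow> nat list \<Rightarrow> nat \<Rightarrow> nat list \<Rightarrow> nat list" where
  "kernel j A x B = (if length A < j - 1 then []
      else drop (length A - (j - 1)) A @ [x] @ take (j - 1) B)"

end

theory Submission
  imports Defs
begin

lemma occ_sum:
  "occ t w = (\<Sum>i<length w + 1 - length t. if reduced (take (length t) (drop i w)) = t then 1 else 0)"
proof -
  have "{i. i + length t \<le> length w \<and> reduced (take (length t) (drop i w)) = t}
      = {i \<in> {..<length w + 1 - length t}. reduced (take (length t) (drop i w)) = t}"
    by auto
  then show ?thesis unfolding occ_def by (simp add: sum.inter_filter[symmetric])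
qed

lemma take_drop_take: "j + L \<le> m \<Longrightarrow> take L (drop j (take m Z)) = take L (drop j Z)"
  by (metis add.commute drop_take le_add_diff_inverse2 take_take min.absorb1 take_drop)

lemma occ_split:
  assumes L: "length t = L" "L \<ge> 1" and X: "length X \<ge> L - 1" and Y: "length Y \<ge> L - 1"
  shows "occ t (X @ [x] @ Y) = occ t X + occ t Y + occ t (kernel L X x Y)"
proof -
  define p where "p = length X"
  define q where "q = length Y"
  define f where "f w i = (if reduced (take L (drop i w)) = t then 1 else (0::nat))" for w i
  define W where "W = X @ [x] @ Y"
  define K where "K = kernel L X x Y"
  have K: "K = drop (p - (L - 1)) X @ [x] @ take (L - 1) Y"
    using X unfolding K_def kernel_def p_def by auto
  have lK: "length K = 2*L - 1" using K X Y L unfolding p_def by auto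
  have occW: "occ t W = sum (f W) {..<p+1+q+1-L}" using occ_sum[of t W] L
    unfolding f_def W_def p_def q_def by simp
  have occX: "occ t X = sum (f X) {..<p+1-L}" using occ_sum[of t X] L
    unfolding f_def p_def by simp
  have occY: "occ t Y = sum (f Y) {..<q+1-L}" using occ_sum[of t Y] L
    unfolding f_def q_def by simp
  have occK: "occ t K = sum (f K) {..<L}" using occ_sum[of t K] L lK
    unfolding f_def by simp
  have s1: "sum (f W) {..<p+1+q+1-L} = sum (f W) {0..<p+1-L} + sum (f W) {p+1-L..<p+1}
       + sum (f W) {p+1..<p+1+q+1-L}"
  proof -
    have a: "p+1-L \<le> p+1" "p+1 \<le> p+1+q+1-L" using X Y L unfolding p_def q_def by auto
    show ?thesis unfolding lessThan_atLeast0
      using sum.atLeastLessThan_concat[OF _ a(1), of 0 "f W"]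
        sum.atLeastLessThan_concat[OF _ a(2), of 0 "f W"] by simp
  qed
  have e1: "sum (f W) {0..<p+1-L} = sum (f X) {..<p+1-L}"
    unfolding lessThan_atLeast0
  proof (rule sum.cong)
    fix i assume "i \<in> {0..<p+1-L}"
    then have "i + L \<le> p" by auto
    then show "f W i = f X i" unfolding f_def W_def p_def
      by (simp add: take_drop_take[symmetric, of i L p] take_append)
  qed simp
  have e3: "sum (f W) {p+1..<p+1+q+1-L} = sum (f Y) {..<q+1-L}"
  proof -
    have "{p+1..<p+1+q+1-L} = {0+(p+1)..<(q+1-L)+(p+1)}"
      using L Y unfolding q_def by auto
    then have "sum (f W) {p+1..<p+1+q+1-L} = sum (f W) {0+(p+1)..<(q+1-L)+(p+1)}"
      by (simp only:)
    also have "\<dots> = sum (\<lambda>i. f W (i + (p+1))) {0..<q+1-L}"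
      by (rule sum.shift_bounds_nat_ivl)
    also have "\<dots> = sum (f Y) {..<q+1-L}" unfolding lessThan_atLeast0
      by (rule sum.cong) (simp_all add: f_def W_def p_def)
    finally show ?thesis .
  qed
  have e2: "sum (f W) {p+1-L..<p+1} = sum (f K) {..<L}"
  proof -
    have "sum (f W) {p+1-L..<p+1} = sum (f W) {0+(p+1-L)..<L+(p+1-L)}"
      using L X unfolding p_def by simp
    also have "\<dots> = sum (\<lambda>i. f W (i + (p+1-L))) {0..<L}"
      by (rule sum.shift_bounds_nat_ivl)
    also have "\<dots> = sum (f K) {..<L}" unfolding lessThan_atLeast0
    proof (rule sum.cong)
      fix j assume j: "j \<in> {0..<L}"
      have "K = take (2*L-1) (drop (p+1-L) W)"
      proof -
        have "take L (x # Y) = x # take (L - 1) Y" using L by (cases L) auto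
        then show ?thesis using K X L unfolding W_def p_def by (simp add: take_append)
      qed
      then have "take L (drop j K) = take L (drop j (drop (p+1-L) W))"
        using j by (simp add: take_drop_take)
      then show "f W (j + (p+1-L)) = f K j" unfolding f_def by (simp add: add.commute)
    qed simp
    finally show ?thesis .
  qed
  show ?thesis using occW occX occY occK s1 e1 e2 e3 unfolding W_def K_def by simp
qed

lemma C_Suc: "C (Suc m) = C m @ [1] @ D m"
  by (simp add: C_def D_def split: prod.splits)
lemma D_Suc: "D (Suc m) = C m @ [2] @ D m"
  by (simp add: C_def D_def split: prod.splits)
lemma len_CD: "length (C m) = 2^m - 1 \<and> length (D m) = 2^m - 1"
proof (induction m)
  case 0 then show ?case by (simp add: C_def D_def)
next
  case (Suc m)
  have "(1::nat) \<le> 2^m" by simp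
  then show ?case using Suc by (simp add: C_Suc D_Suc)
qed

lemma D_suffix: "k \<le> m \<Longrightarrow> \<exists>X. D m = X @ D k"
proof (induction m rule: dec_induct)
  case base then show ?case by auto
next
  case (step m) then show ?case by (auto simp: D_Suc)
qed
lemma C_suffix: "k < m \<Longrightarrow> \<exists>X. C m = X @ D k"
proof -
  assume "k < m"
  then obtain m' where m: "m = Suc m'" "k \<le> m'" by (cases m) auto
  then obtain X where "D m' = X @ D k" using D_suffix by blast
  then show ?thesis using m by (auto simp: C_Suc)
qed
lemma C_prefix: "k \<le> m \<Longrightarrow> \<exists>Y. C m = C k @ Y"
proof (induction m rule: dec_induct)
  case base then show ?case by auto
next
  case (step m) then show ?case by (auto simp: C_Suc)
qed
lemma D_prefix: "k < m \<Longrightarrow> \<exists>Y. D m = C k @ Y"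
proof -
  assume "k < m"
  then obtain m' where m: "m = Suc m'" "k \<le> m'" by (cases m) auto
  then obtain Y where "C m' = C k @ Y" using C_prefix by blast
  then show ?thesis using m by (auto simp: D_Suc)
qed

lemma kernel_local:
  assumes "L - 1 \<le> length A" "length A = length B" "L - 1 \<le> length B"
  shows "kernel L (X @ A) x (B @ Y) = kernel L A x B"
  using assms unfolding kernel_def by auto

lemma recur:
  assumes L: "length t = L" "L \<ge> 1" and kL: "L \<le> 2^k" and m: "k < m"
  shows "occ t (C (Suc m)) = occ t (C m) + occ t (D m) + occ t (kernel L (D k) 1 (C k))
       \<and> occ t (D (Suc m)) = occ t (C m) + occ t (D m) + occ t (kernel L (D k) 2 (C k))"
proof -
  have km: "(2::nat)^k \<le> 2^m" using m by (simp add: power_increasing)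
  have l: "L - 1 \<le> length (C m)" "L - 1 \<le> length (D m)"
    "L - 1 \<le> length (C k)" "L - 1 \<le> length (D k)" "length (D k) = length (C k)"
    using len_CD[of m] len_CD[of k] kL km by (auto simp del: power_increasing_iff)
  obtain X where X: "C m = X @ D k" using C_suffix m by blast
  obtain Y where Y: "D m = C k @ Y" using D_prefix m by blast
  have "kernel L (C m) x (D m) = kernel L (D k) x (C k)" for x
    unfolding X Y by (rule kernel_local) (use l in auto)
  then show ?thesis using occ_split[OF L l(1,2)] by (simp add: C_Suc D_Suc)
qed

lemma log_bound:
  assumes "l \<ge> 1" shows "l \<le> 2 ^ nat \<lceil>log 2 (real l)\<rceil>"
proof -
  have "real l = 2 powr (log 2 (real l))" using assms by simp
  also have "\<dots> \<le> 2 powr (real (nat \<lceil>log 2 (real l)\<rceil>))"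
    by (rule powr_mono) linarith+
  also have "\<dots> = 2 ^ nat \<lceil>log 2 (real l)\<rceil>" by (simp add: powr_realpow)
  finally show ?thesis by (metis of_nat_le_iff of_nat_numeral of_nat_power)
qed

theorem theorem4:
  fixes t :: "nat list" and n :: nat
  assumes "is_pattern t"
  defines "l \<equiv> length t"
  defines "k \<equiv> nat \<lceil>log 2 (real l)\<rceil>"
  defines "a \<equiv> occ t (kernel l (D k) 1 (C k))"
  defines "b \<equiv> occ t (kernel l (D k) 2 (C k))"
  assumes "n > k + 1"
  shows "int (occ t (C n)) = (int a + int b + int (occ t (C (k+1))) + int (occ t (D (k+1)))) * 2 ^ (n - k - 2) - int b
       \<and> int (occ t (D n)) = (int a + int b + int (occ t (C (k+1))) + int (occ t (D (k+1)))) * 2 ^ (n - k - 2) - int a"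
proof -
  have l1: "l \<ge> 1" using assms(1) unfolding is_pattern_def l_def by (cases t) auto
  have kl: "l \<le> 2^k" unfolding k_def by (rule log_bound[OF l1])
  define S where "S = int a + int b + int (occ t (C (k+1))) + int (occ t (D (k+1)))"
  have R: "m > k \<Longrightarrow> int (occ t (C (Suc m))) = int (occ t (C m)) + int (occ t (D m)) + int a
       \<and> int (occ t (D (Suc m))) = int (occ t (C m)) + int (occ t (D m)) + int b" for m
    using recur[of t l k m] l1 kl unfolding a_def b_def l_def by simp
  have main: "int (occ t (C (k+2+j))) = S * 2^j - int b \<and> int (occ t (D (k+2+j))) = S * 2^j - int a" for j
  proof (induction j)
    case 0
    have "k + 2 + 0 = Suc (k+1)" by simp
    then show ?case using R[of "k+1"] unfolding S_def by (simp only:) simp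
  next
    case (Suc j)
    have e: "k + 2 + Suc j = Suc (k+2+j)" by simp
    have "(2::int)^Suc j = 2 * 2^j" by simp
    then show ?case unfolding e using R[of "k+2+j"] Suc by (simp only:) linarith
  qed
  define j where "j = n - k - 2"
  have n: "k + 2 + j = n" using assms(6) unfolding j_def by simp
  have "int (occ t (C n)) = S * 2^j - int b \<and> int (occ t (D n)) = S * 2^j - int a"
    using main[of j] unfolding n .
  then show ?thesis unfolding S_def j_def .
qed

end
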